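(* Let $(Z_n)$ be a Galton–Watson process with offspring distribution $Z$ satisfying $Z\ge 1$ almost surely, let $W$ be a nonnegative weight distribution, and let $\Lambda_n$ be the minimum of the weights of the $Z_n$ edges entering generation $n$ (independent copies of $W$, independent of the process). Then $\Pr\{\sum_n\Lambda_n<\infty\}=1$ if and only if both (i) $\Pr\big\{\sum_n(\Pr\{W>1\})^{Z_n}<\infty\big\}=1$, and (ii) $\Pr\big\{\sum_n\int_0^1(\Pr\{W>t\})^{Z_n}\,dt<\infty\big\}=1$; otherwise $\Pr\{\sum_n\Lambda_n<\infty\}=0$.
   Context: $Z_n$ denotes the number of individuals in generation $n$ of the Galton–Watson process with offspring distribution $Z$ started from one individual; each edge from generation $n-1$ to generation $n$ of the Galton–Watson tree carries an independent weight distributed as $W$. *)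

theory Defs
  imports "HOL-Probability.Probability"
begin

text \<open>A sample point is a pair (xi, w): xi (n,i) is the number of children of the i-th
  individual of generation n (i.i.d. with the offspring law), and w (n,k) is the weight
  on the k-th edge entering generation n
  (i.i.d. with law W); all coordinates are independent (product measure).\<close>

definition gw_space :: "nat pmf \<Rightarrow> real measure \<Rightarrow> ((nat \<times> nat \<Rightarrow> nat) \<times> (nat \<times> nat \<Rightarrow> real)) measure" where
  "gw_space p W = (PiM UNIV (\<lambda>_. measure_pmf p)) \<Otimes>\<^sub>M (PiM UNIV (\<lambda>_. W))"

fun gw_gen :: "(nat \<times> nat \<Rightarrow> nat) \<Rightarrow> nat \<Rightarrow> nat" where
  "gw_gen xi 0 = 1"
| "gw_gen xi (Suc n) = (\<Sum>i<gw_gen xi n. xi (n, i))"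

definition gw_min_weight :: "((nat \<times> nat \<Rightarrow> nat) \<times> (nat \<times> nat \<Rightarrow> real)) \<Rightarrow> nat \<Rightarrow> real" where
  "gw_min_weight \<omega> n = Min ((\<lambda>k. snd \<omega> (n, k)) ` {..<gw_gen (fst \<omega>) n})"

end

theory Submission
  imports Defs
begin


definition Lw :: "(nat \<Rightarrow> nat) \<Rightarrow> (nat\<times>nat \<Rightarrow> real) \<Rightarrow> nat \<Rightarrow> real" where
  "Lw z w n = Min ((\<lambda>k. w (n,k)) ` {..<z n})"

lemma Lw_gt_iff: "1 \<le> z n \<Longrightarrow> t < Lw z w n \<longleftrightarrow> (\<forall>k<z n. t < w (n,k))"
proof -
  assume "1 \<le> z n"
  then have "(\<lambda>k. w (n, k)) ` {..<z n} \<noteq> {}" by (auto simp: lessThan_empty_iff)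
  then show ?thesis unfolding Lw_def by (subst Min_gr_iff) auto
qed

lemma tail_prob:
  assumes W: "prob_space W" "sets W = sets borel" and z: "1 \<le> z n"
  shows "emeasure (PiM UNIV (\<lambda>_::nat\<times>nat. W)) {w\<in>space (PiM UNIV (\<lambda>_::nat\<times>nat. W)). t < Lw z w n}
       = ennreal ((measure W {t<..}) ^ (z n))"
proof -
  let ?J = "(\<lambda>k. (n,k)) ` {..<z n}"
  have sp: "space W = UNIV" using W(2) sets_eq_imp_space_eq by force
  have eq: "{w\<in>space (PiM UNIV (\<lambda>_::nat\<times>nat. W)). t < Lw z w n}
        = prod_emb UNIV (\<lambda>_. W) ?J (Pi\<^sub>E ?J (\<lambda>_. {t<..}))"
    using z by (auto simp: Lw_gt_iff prod_emb_def PiE_iff restrict_def space_PiM sp)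
  have "emeasure (PiM UNIV (\<lambda>_::nat\<times>nat. W)) {w\<in>space (PiM UNIV (\<lambda>_::nat\<times>nat. W)). t < Lw z w n}
       = (\<Prod>i\<in>?J. emeasure W {t<..})"
    by (subst eq, rule emeasure_PiM_emb) (use W in auto)
  also have "\<dots> = emeasure W {t<..} ^ card ?J" by simp
  also have "card ?J = z n" by (simp add: card_image inj_on_def)
  also have "emeasure W {t<..} = ennreal (measure W {t<..})"
    using W(1) by (simp add: finite_measure.emeasure_eq_measure prob_space_def)
  finally show ?thesis by (simp add: ennreal_power)
qed

definition Yr :: "(nat \<Rightarrow> nat) \<Rightarrow> (nat\<times>nat \<Rightarrow> real) \<Rightarrow> nat \<Rightarrow> real" where
  "Yr z w n = max 0 (min (Lw z w n) 1)"

lemma comp_meas: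
  assumes "sets W = sets borel"
  shows "(\<lambda>w. w i) \<in> borel_measurable (PiM UNIV (\<lambda>_::nat\<times>nat. W))"
proof -
  have "(\<lambda>w. w i) \<in> measurable (PiM UNIV (\<lambda>_::nat\<times>nat. W)) W" by simp
  then show ?thesis using assms by (simp cong: measurable_cong_sets)
qed

lemma Lw_meas:
  assumes "sets W = sets borel"
  shows "(\<lambda>w. Lw z w n) \<in> borel_measurable (PiM UNIV (\<lambda>_::nat\<times>nat. W))"
  unfolding Lw_def using comp_meas[OF assms] by (intro borel_measurable_Min) auto

lemma ind_layer:
  fixes y :: real
  shows "(\<integral>\<^sup>+t. indicator {0..1} t * indicator {..<y} t \<partial>lborel) = ennreal (max 0 (min y 1))"
proof -
  have "(\<integral>\<^sup>+t. indicator {0..1} t * indicator {..<y} t \<partial>lborel) = (\<integral>\<^sup>+t. indicator ({0..1} \<inter> {..<y}) t \<partial>lborel)"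
    by (simp add: indicator_inter_arith)
  also have "\<dots> = emeasure lborel ({0..1} \<inter> {..<y})" by simp
  also have "\<dots> = ennreal (max 0 (min y 1))"
  proof (cases "y \<le> 0")
    case True
    then have "{0..1} \<inter> {..<y} = {}" by auto
    then show ?thesis using True by simp
  next
    case False
    show ?thesis
    proof (cases "y \<le> 1")
      case True
      then have "{0..1} \<inter> {..<y} = {0..<y}" by auto
      then show ?thesis using True False by simp
    next
      case F2: False
      then have "{0..1} \<inter> {..<y} = {0..1::real}" by auto
      then show ?thesis using F2 by simp
    qed
  qed
  finally show ?thesis .
qed

lemma layer:
  assumes W: "prob_space W" "sets W = sets borel" and z: "1 \<le> z n"
  shows "(\<integral>\<^sup>+w. ennreal (Yr z w n) \<partial>PiM UNIV (\<lambda>_::nat\<times>nat. W))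
       = (\<integral>\<^sup>+t. indicator {0..1} t * ennreal (measure W {t<..} ^ z n) \<partial>lborel)"
proof -
  let ?M = "PiM UNIV (\<lambda>_::nat\<times>nat. W)"
  interpret P: prob_space ?M using W by (intro prob_space_PiM) auto
  interpret PS: pair_sigma_finite ?M lborel by unfold_locales
  have Lm[measurable]: "(\<lambda>w. Lw z w n) \<in> borel_measurable ?M" using Lw_meas[OF W(2)] .
  have "(\<integral>\<^sup>+w. ennreal (Yr z w n) \<partial>?M) = (\<integral>\<^sup>+w. (\<integral>\<^sup>+t. indicator {0..1} t * indicator {..<Lw z w n} t \<partial>lborel) \<partial>?M)"
    by (simp add: ind_layer Yr_def)
  also have "\<dots> = (\<integral>\<^sup>+t. (\<integral>\<^sup>+w. indicator {0..1} t * indicator {..<Lw z w n} t \<partial>?M) \<partial>lborel)"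
  proof (rule PS.Fubini'[symmetric])
    show "(\<lambda>(w, t). indicator {0..1} t * indicator {..<Lw z w n} t :: ennreal) \<in> borel_measurable (?M \<Otimes>\<^sub>M lborel)"
      unfolding indicator_def lessThan_iff by measurable
  qed
  also have "\<dots> = (\<integral>\<^sup>+t. indicator {0..1} t * emeasure ?M {w\<in>space ?M. t < Lw z w n} \<partial>lborel)"
  proof (rule nn_integral_cong)
    fix t :: real
    have "(\<integral>\<^sup>+w. indicator {0..1} t * indicator {..<Lw z w n} t \<partial>?M)
        = (\<integral>\<^sup>+w. indicator {0..1} t * indicator {w\<in>space ?M. t < Lw z w n} w \<partial>?M)"
      by (intro nn_integral_cong) (auto simp: indicator_def)
    also have "\<dots> = indicator {0..1} t * emeasure ?M {w\<in>space ?M. t < Lw z w n}"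
      by (intro nn_integral_cmult_indicator) measurable
    finally show "(\<integral>\<^sup>+w. indicator {0..1} t * indicator {..<Lw z w n} t \<partial>?M) = indicator {0..1} t * emeasure ?M {w\<in>space ?M. t < Lw z w n}" .
  qed
  also have "\<dots> = (\<integral>\<^sup>+t. indicator {0..1} t * ennreal (measure W {t<..} ^ z n) \<partial>lborel)"
    using tail_prob[OF W, of z n] z by simp
  finally show ?thesis .
qed

definition gf :: "real measure \<Rightarrow> nat \<Rightarrow> real" where
  "gf W k = (LBINT t:{0..1}. (measure W {t<..}) ^ k)"

lemma F_meas:
  fixes W :: "real measure"
  assumes W: "prob_space W" "sets W = sets borel"
  shows "(\<lambda>t. measure W {t<..} ^ k) \<in> borel_measurable borel"
proof -
  interpret prob_space W by fact
  have "mono (\<lambda>t::real. - measure W {t<..})"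
  proof (rule monoI)
    fix x y :: real assume "x \<le> y"
    then have "{y<..} \<subseteq> {x<..}" by auto
    then show "- measure W {x<..} \<le> - measure W {y<..}"
      using finite_measure_mono[of "{y<..}" "{x<..}"] W(2) by simp
  qed
  then have "(\<lambda>t::real. - measure W {t<..}) \<in> borel_measurable borel" by (rule borel_measurable_mono)
  then have "(\<lambda>t::real. - (- measure W {t<..})) \<in> borel_measurable borel" by measurable
  then show ?thesis by simp
qed

lemma gf_nn:
  fixes W :: "real measure"
  assumes W: "prob_space W" "sets W = sets borel"
  shows "ennreal (gf W k) = (\<integral>\<^sup>+t. indicator {0..1} t * ennreal (measure W {t<..} ^ k) \<partial>lborel)"
proof -
  interpret prob_space W by fact
  have Fm[measurable]: "(\<lambda>t. measure W {t<..} ^ k) \<in> borel_measurable borel" using F_meas[OF W] .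
  have int: "integrable lborel (\<lambda>t. indicator {0..1} t *\<^sub>R (measure W {t<..} ^ k))"
  proof (rule integrableI_bounded_set[where A="{0..1}" and B=1])
    show "AE x in lborel. x \<in> {0..1} \<longrightarrow> norm (indicator {0..1} x *\<^sub>R measure W {x<..} ^ k) \<le> 1"
      by (auto intro!: power_le_one)
  qed (auto simp: indicator_def)
  have "(\<integral>\<^sup>+t. indicator {0..1} t * ennreal (measure W {t<..} ^ k) \<partial>lborel)
      = (\<integral>\<^sup>+t. ennreal (indicator {0..1} t *\<^sub>R (measure W {t<..} ^ k)) \<partial>lborel)"
    by (intro nn_integral_cong) (auto simp: indicator_def)
  also have "\<dots> = ennreal (integral\<^sup>L lborel (\<lambda>t. indicator {0..1} t *\<^sub>R (measure W {t<..} ^ k)))"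
    by (rule nn_integral_eq_integral[OF int]) (auto simp: indicator_def)
  finally show ?thesis by (simp add: gf_def set_lebesgue_integral_def)
qed

lemma gf_nonneg:
  fixes W :: "real measure"
  assumes W: "prob_space W" "sets W = sets borel"
  shows "0 \<le> gf W k"
proof -
  show ?thesis unfolding gf_def set_lebesgue_integral_def
    by (intro integral_nonneg_AE) (auto simp: indicator_def)
qed

lemma gf_antimono:
  fixes W :: "real measure"
  assumes W: "prob_space W" "sets W = sets borel" and km: "k \<le> m"
  shows "gf W m \<le> gf W k"
proof -
  interpret prob_space W by fact
  have "ennreal (gf W m) \<le> ennreal (gf W k)"
    unfolding gf_nn[OF W]
    by (intro nn_integral_mono) (auto simp: indicator_def intro!: power_decreasing km)
  then show ?thesis using gf_nonneg[OF W] by simp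
qed

lemma gf_ge:
  fixes W :: "real measure"
  assumes W: "prob_space W" "sets W = sets borel"
  shows "measure W {1<..} ^ k \<le> gf W k"
proof -
  interpret prob_space W by fact
  have "ennreal (measure W {1<..} ^ k) = (\<integral>\<^sup>+t. indicator {0..1::real} t * ennreal (measure W {1<..} ^ k) \<partial>lborel)"
    by (subst mult.commute, subst nn_integral_cmult_indicator) (auto intro: borel_closed)
  also have "\<dots> \<le> (\<integral>\<^sup>+t. indicator {0..1} t * ennreal (measure W {t<..} ^ k) \<partial>lborel)"
  proof (intro nn_integral_mono)
    fix t :: real
    show "indicator {0..1} t * ennreal (measure W {1<..} ^ k) \<le> indicator {0..1} t * ennreal (measure W {t<..} ^ k)"
    proof (cases "t \<in> {0..1}")
      case True
      then have "measure W {1<..} \<le> measure W {t<..}"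
        using finite_measure_mono[of "{1<..}" "{t<..}"] W(2) by auto
      then show ?thesis using True by (auto intro!: power_mono)
    qed simp
  qed
  also have "\<dots> = ennreal (gf W k)" using gf_nn[OF W] by simp
  finally show ?thesis using gf_nonneg[OF W] by simp
qed

lemma EYr:
  fixes W :: "real measure"
  assumes W: "prob_space W" "sets W = sets borel" and z: "1 \<le> z n"
  shows "(\<integral>\<^sup>+w. ennreal (Yr z w n) \<partial>PiM UNIV (\<lambda>_::nat\<times>nat. W)) = ennreal (gf W (z n))"
  using layer[OF W, of z n] gf_nn[OF W, of "z n"] z by simp

lemma Yr_meas:
  assumes "sets W = sets borel"
  shows "(\<lambda>w. Yr z w n) \<in> borel_measurable (PiM UNIV (\<lambda>_::nat\<times>nat. W))"
  unfolding Yr_def using Lw_meas[OF assms] by measurable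

lemma AE_nonneg_coords:
  fixes W :: "real measure"
  assumes W: "prob_space W" and nn: "AE x in W. 0 \<le> x"
  shows "AE w in PiM UNIV (\<lambda>_::nat\<times>nat. W). \<forall>i. 0 \<le> w i"
  unfolding AE_all_countable
  by (intro allI AE_PiM_component) (use W nn in auto)

lemma Lw_nonneg: "(\<forall>i. 0 \<le> w i) \<Longrightarrow> 1 \<le> z n \<Longrightarrow> 0 \<le> Lw z w n"
proof -
  assume a: "\<forall>i. 0 \<le> w i" "1 \<le> z n"
  then have "(\<lambda>k. w (n, k)) ` {..<z n} \<noteq> {}" by (auto simp: lessThan_empty_iff)
  then show ?thesis unfolding Lw_def using a(1) by (subst Min_ge_iff) auto
qed

lemma fwd:
  fixes W :: "real measure"
  assumes W: "prob_space W" "sets W = sets borel" and nn: "AE x in W. 0 \<le> x"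
    and z: "\<And>n. 1 \<le> z n" and sg: "summable (\<lambda>n. gf W (z n))"
  shows "AE w in PiM UNIV (\<lambda>_::nat\<times>nat. W). summable (\<lambda>n. Lw z w n)"
proof -
  let ?M = "PiM UNIV (\<lambda>_::nat\<times>nat. W)"
  have "(\<integral>\<^sup>+w. (\<Sum>n. ennreal (Yr z w n)) \<partial>?M) = (\<Sum>n. \<integral>\<^sup>+w. ennreal (Yr z w n) \<partial>?M)"
    by (rule nn_integral_suminf) (use Yr_meas[OF W(2)] in measurable)
  also have "\<dots> = (\<Sum>n. ennreal (gf W (z n)))" using EYr[OF W] z by simp
  also have "\<dots> \<noteq> \<infinity>" using ennreal_suminf_neq_top[OF sg, OF gf_nonneg[OF W]] by simp
  finally have "AE w in ?M. (\<Sum>n. ennreal (Yr z w n)) \<noteq> \<infinity>"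
    by (intro nn_integral_PInf_AE) (use Yr_meas[OF W(2)] in measurable)
  then show ?thesis using AE_nonneg_coords[OF W(1) nn]
  proof eventually_elim
    case (elim w)
    have "summable (\<lambda>n. Yr z w n)"
      by (rule summable_suminf_not_top) (use elim in \<open>auto simp: Yr_def\<close>)
    then have "(\<lambda>n. Yr z w n) \<longlonglongrightarrow> 0" by (rule summable_LIMSEQ_zero)
    then have "eventually (\<lambda>n. Yr z w n < 1) sequentially"
      by (rule order_tendstoD) simp
    then have "eventually (\<lambda>n. Lw z w n = Yr z w n) sequentially"
    proof eventually_elim
      case (elim n)
      have "0 \<le> Lw z w n" using Lw_nonneg[of w z n] \<open>\<forall>i. 0 \<le> w i\<close> z[of n] by blast
      then show ?case using elim unfolding Yr_def max_def min_def by (auto split: if_splits)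
    qed
    then show ?case using summable_cong \<open>summable (\<lambda>n. Yr z w n)\<close> by blast
  qed
qed



lemma indep_coords:
  fixes M :: "'a measure"
  assumes "prob_space M"
  shows "prob_space.indep_vars (PiM UNIV (\<lambda>_::'i. M)) (\<lambda>_. M) (\<lambda>i x. x i) UNIV"
proof -
  interpret P: prob_space "PiM UNIV (\<lambda>_::'i. M)" using assms by (intro prob_space_PiM) auto
  have "distr (PiM UNIV (\<lambda>_::'i. M)) (PiM UNIV (\<lambda>_::'i. M)) (\<lambda>x. \<lambda>i\<in>UNIV. x i) = PiM UNIV (\<lambda>_::'i. M)"
    by (simp add: restrict_def distr_id2)
  also have "\<dots> = PiM UNIV (\<lambda>i. distr (PiM UNIV (\<lambda>_::'i. M)) M (\<lambda>x. x i))"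
    using assms by (intro PiM_cong refl distr_PiM_component[symmetric]) auto
  finally show ?thesis
    by (subst P.indep_vars_iff_distr_eq_PiM) auto
qed

lemma indep_blocks:
  fixes M :: "'a measure"
  assumes "prob_space M"
  shows "prob_space.indep_vars (PiM UNIV (\<lambda>_::nat\<times>nat. M)) (\<lambda>n. PiM ({n}\<times>UNIV) (\<lambda>_. M))
           (\<lambda>n \<omega>. restrict \<omega> ({n}\<times>UNIV)) UNIV"
proof -
  interpret P: prob_space "PiM UNIV (\<lambda>_::nat\<times>nat. M)" using assms by (intro prob_space_PiM) auto
  have "P.indep_vars (\<lambda>j. PiM ({j}\<times>UNIV) (\<lambda>_. M)) (\<lambda>j \<omega>. restrict (\<lambda>i. \<omega> i) ({j}\<times>UNIV)) UNIV"
    by (rule P.indep_vars_restrict[OF indep_coords[OF assms]]) (auto simp: disjoint_family_on_def)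
  then show ?thesis by simp
qed

lemma indep_blocks_compose:
  fixes M :: "'a measure"
  assumes "prob_space M" and h: "\<And>n. h n \<in> measurable (PiM ({n}\<times>UNIV) (\<lambda>_. M)) (N n)"
  shows "prob_space.indep_vars (PiM UNIV (\<lambda>_::nat\<times>nat. M)) N
           (\<lambda>n \<omega>. h n (restrict \<omega> ({n}\<times>UNIV))) UNIV"
proof -
  interpret P: prob_space "PiM UNIV (\<lambda>_::nat\<times>nat. M)" using assms by (intro prob_space_PiM) auto
  show ?thesis
    by (rule P.indep_vars_compose2[OF indep_blocks[OF assms(1)]]) (use h in auto)
qed

lemma exp_bound: "0 \<le> y \<Longrightarrow> y \<le> (1::real) \<Longrightarrow> exp (- y) \<le> 1 - (1 - exp (-1)) * y"
proof -
  assume y: "0 \<le> y" "y \<le> 1"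
  have "exp ((1 - y) *\<^sub>R 0 + y *\<^sub>R (-1)) \<le> (1 - y) * exp 0 + y * exp (-1)"
    using y by (intro convex_onD[OF exp_convex]) auto
  then show ?thesis by (simp add: algebra_simps)
qed



lemma indep_expYr:
  fixes W :: "real measure"
  assumes W: "prob_space W" "sets W = sets borel"
  shows "prob_space.indep_vars (PiM UNIV (\<lambda>_::nat\<times>nat. W)) (\<lambda>_. borel)
           (\<lambda>n w. ennreal (exp (- Yr z w n))) UNIV"
proof -
  interpret P: prob_space "PiM UNIV (\<lambda>_::nat\<times>nat. W)" using W by (intro prob_space_PiM) auto
  define h where "h n f = ennreal (exp (- max 0 (min (Min ((\<lambda>k. f (n,k)) ` {..<z n})) 1)))"
    for n and f :: "nat\<times>nat \<Rightarrow> real"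
  have hm: "h n \<in> borel_measurable (PiM ({n}\<times>UNIV) (\<lambda>_. W))" for n
  proof -
    have c: "(\<lambda>f. f (n,k)) \<in> borel_measurable (PiM ({n}\<times>UNIV) (\<lambda>_. W))" for k
    proof -
      have "(\<lambda>f. f (n,k)) \<in> measurable (PiM ({n}\<times>UNIV) (\<lambda>_. W)) W" by simp
      then show ?thesis using W(2) by (simp cong: measurable_cong_sets)
    qed
    have "(\<lambda>f. Min ((\<lambda>k. f (n,k)) ` {..<z n})) \<in> borel_measurable (PiM ({n}\<times>UNIV) (\<lambda>_. W))"
      using c by (intro borel_measurable_Min) auto
    then show ?thesis unfolding h_def by measurable
  qed
  have "P.indep_vars (\<lambda>_. borel) (\<lambda>n \<omega>. h n (restrict \<omega> ({n}\<times>UNIV))) UNIV"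
    by (rule indep_blocks_compose[OF W(1) hm])
  moreover have "(\<lambda>\<omega>. h n (restrict \<omega> ({n}\<times>UNIV))) = (\<lambda>w. ennreal (exp (- Yr z w n)))" for n
    by (auto simp: h_def Yr_def Lw_def restrict_def)
  ultimately show ?thesis by simp
qed

lemma E_expYr:
  fixes W :: "real measure"
  assumes W: "prob_space W" "sets W = sets borel" and z: "1 \<le> z n"
  shows "(\<integral>\<^sup>+w. ennreal (exp (- Yr z w n)) \<partial>PiM UNIV (\<lambda>_::nat\<times>nat. W))
     \<le> ennreal (exp (- (1 - exp (-1)) * gf W (z n)))"
proof -
  let ?M = "PiM UNIV (\<lambda>_::nat\<times>nat. W)"
  let ?c = "1 - exp (-1::real)"
  interpret P: prob_space ?M using W by (intro prob_space_PiM) auto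
  have Ym[measurable]: "(\<lambda>w. Yr z w n) \<in> borel_measurable ?M" by (rule Yr_meas[OF W(2)])
  have Y01: "0 \<le> Yr z w n" "Yr z w n \<le> 1" for w by (auto simp: Yr_def)
  have c01: "0 \<le> ?c" "?c \<le> 1" by auto
  have intY: "integrable ?M (\<lambda>w. Yr z w n)"
    by (rule P.integrable_const_bound[where B=1]) (use Y01 in auto)
  have EY: "integral\<^sup>L ?M (\<lambda>w. Yr z w n) = gf W (z n)"
  proof -
    have "ennreal (integral\<^sup>L ?M (\<lambda>w. Yr z w n)) = (\<integral>\<^sup>+w. ennreal (Yr z w n) \<partial>?M)"
      by (rule nn_integral_eq_integral[OF intY, symmetric]) (use Y01 in auto)
    also have "\<dots> = ennreal (gf W (z n))" using EYr[OF W, of z n] z by simp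
    finally show ?thesis using gf_nonneg[OF W] integral_nonneg_AE[of "\<lambda>w. Yr z w n" ?M] Y01
      by (subst (asm) ennreal_inj) auto
  qed
  have "(\<integral>\<^sup>+w. ennreal (exp (- Yr z w n)) \<partial>?M) \<le> (\<integral>\<^sup>+w. ennreal (1 - ?c * Yr z w n) \<partial>?M)"
    by (intro nn_integral_mono ennreal_leI exp_bound Y01)
  also have "\<dots> = ennreal (integral\<^sup>L ?M (\<lambda>w. 1 - ?c * Yr z w n))"
  proof (rule nn_integral_eq_integral)
    show "integrable ?M (\<lambda>w. 1 - ?c * Yr z w n)" using intY by auto
    show "AE w in ?M. 0 \<le> 1 - ?c * Yr z w n"
      using Y01 c01 by (auto intro!: mult_le_one)
  qed
  also have "integral\<^sup>L ?M (\<lambda>w. 1 - ?c * Yr z w n) = 1 - ?c * gf W (z n)"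
    using intY EY by (simp add: P.prob_space)
  also have "1 - ?c * gf W (z n) \<le> exp (- ?c * gf W (z n))"
    using exp_ge_add_one_self[of "- ?c * gf W (z n)"] by (simp only: mult_minus_left)
  finally show ?thesis by (simp add: ennreal_leI)
qed



lemma nonsummable_unbounded:
  fixes g :: "nat \<Rightarrow> real"
  assumes "\<And>n. 0 \<le> g n" "\<not> summable g"
  shows "\<exists>N. B < (\<Sum>n<N. g n)"
proof (rule ccontr)
  assume "\<not> ?thesis"
  then have "(\<Sum>k\<le>n. g k) \<le> B" for n
    using lessThan_Suc_atMost[of n] by (metis not_less)
  then have "summable g" by (intro bounded_imp_summable[where B=B]) (use assms in auto)
  with assms show False by simp
qed

lemma bwd:
  fixes W :: "real measure"
  assumes W: "prob_space W" "sets W = sets borel" and nn: "AE x in W. 0 \<le> x"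
    and z: "\<And>n. 1 \<le> z n" and ns: "\<not> summable (\<lambda>n. gf W (z n))"
  shows "AE w in PiM UNIV (\<lambda>_::nat\<times>nat. W). \<not> summable (\<lambda>n. Lw z w n)"
proof -
  let ?M = "PiM UNIV (\<lambda>_::nat\<times>nat. W)"
  let ?c = "1 - exp (-1::real)"
  interpret P: prob_space ?M using W by (intro prob_space_PiM) auto
  have Ym[measurable]: "\<And>n. (\<lambda>w. Yr z w n) \<in> borel_measurable ?M" by (rule Yr_meas[OF W(2)])
  have Y01: "0 \<le> Yr z w n" "Yr z w n \<le> 1" for w n by (auto simp: Yr_def)
  have cpos: "0 < ?c" by simp
  have gnn: "\<And>n. 0 \<le> gf W (z n)" using gf_nonneg[OF W] by auto
  define G where "G N = (\<Sum>n<N. gf W (z n))" for N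
  have prodE: "(\<integral>\<^sup>+w. (\<Prod>n<N. ennreal (exp (- Yr z w n))) \<partial>?M) \<le> ennreal (exp (- ?c * G N))" for N
  proof -
    have "(\<integral>\<^sup>+w. (\<Prod>n<N. ennreal (exp (- Yr z w n))) \<partial>?M) = (\<Prod>n<N. \<integral>\<^sup>+w. ennreal (exp (- Yr z w n)) \<partial>?M)"
      by (rule P.indep_vars_nn_integral)
         (auto intro: P.indep_vars_subset[OF indep_expYr[OF W]])
    also have "\<dots> \<le> (\<Prod>n<N. ennreal (exp (- ?c * gf W (z n))))"
      by (intro prod_mono_ennreal E_expYr[OF W, of z, OF z])
    also have "\<dots> = ennreal (\<Prod>n<N. exp (- ?c * gf W (z n)))"
      by (rule prod_ennreal) auto
    also have "(\<Prod>n<N. exp (- ?c * gf W (z n))) = exp (- ?c * G N)"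
      by (simp add: G_def exp_sum[symmetric] sum_distrib_left)
    finally show ?thesis .
  qed
  define B where "B L = {w\<in>space ?M. \<forall>N. (\<Sum>n<N. Yr z w n) \<le> real L}" for L :: nat
  have Bm[measurable]: "B L \<in> sets ?M" for L unfolding B_def by measurable
  have Bbound: "emeasure ?M (B L) \<le> ennreal (exp (real L - ?c * G N))" for L N
  proof -
    have "emeasure ?M (B L) = (\<integral>\<^sup>+w. indicator (B L) w \<partial>?M)" by simp
    also have "\<dots> \<le> (\<integral>\<^sup>+w. ennreal (exp (real L)) * (\<Prod>n<N. ennreal (exp (- Yr z w n))) \<partial>?M)"
    proof (intro nn_integral_mono)
      fix w
      show "indicator (B L) w \<le> ennreal (exp (real L)) * (\<Prod>n<N. ennreal (exp (- Yr z w n)))"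
      proof (cases "w \<in> B L")
        case True
        then have le: "(\<Sum>n<N. Yr z w n) \<le> real L" by (auto simp: B_def)
        have "(\<Prod>n<N. ennreal (exp (- Yr z w n))) = ennreal (exp (- (\<Sum>n<N. Yr z w n)))"
          by (subst prod_ennreal) (auto simp: exp_sum[symmetric] sum_negf)
        then have "ennreal (exp (real L)) * (\<Prod>n<N. ennreal (exp (- Yr z w n)))
             = ennreal (exp (real L - (\<Sum>n<N. Yr z w n)))"
          by (simp add: ennreal_mult[symmetric] exp_diff exp_minus field_simps)
        moreover have "1 \<le> exp (real L - (\<Sum>n<N. Yr z w n))" using le by simp
        ultimately show ?thesis using True by (simp add: ennreal_leI)
      qed simp
    qed
    also have "\<dots> = ennreal (exp (real L)) * (\<integral>\<^sup>+w. (\<Prod>n<N. ennreal (exp (- Yr z w n))) \<partial>?M)"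
      by (rule nn_integral_cmult) measurable
    also have "\<dots> \<le> ennreal (exp (real L)) * ennreal (exp (- ?c * G N))"
      by (intro mult_left_mono prodE) auto
    also have "\<dots> = ennreal (exp (real L) * exp (- ?c * G N))"
      by (simp add: ennreal_mult[symmetric])
    also have "exp (real L) * exp (- ?c * G N) = exp (real L - ?c * G N)"
      by (simp add: exp_add[symmetric] algebra_simps)
    finally show ?thesis .
  qed
  have Bnull: "B L \<in> null_sets ?M" for L
  proof -
    have "measure ?M (B L) \<le> 0"
    proof (rule ccontr)
      assume "\<not> measure ?M (B L) \<le> 0"
      then have e: "0 < measure ?M (B L)" by simp
      obtain N where N: "(real L - ln (measure ?M (B L))) / ?c < G N"
        using nonsummable_unbounded[OF gnn ns] unfolding G_def by blast
      then have "real L - ln (measure ?M (B L)) < ?c * G N"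
        using cpos by (simp add: divide_less_eq mult.commute)
      then have "real L - ?c * G N < ln (measure ?M (B L))" by simp
      then have "exp (real L - ?c * G N) < measure ?M (B L)"
        using e by (metis exp_less_cancel_iff exp_ln)
      moreover have "ennreal (measure ?M (B L)) \<le> ennreal (exp (real L - ?c * G N))"
        using Bbound[of L N] by (simp add: P.emeasure_eq_measure)
      ultimately show False by (simp add: ennreal_le_iff)
    qed
    then have "measure ?M (B L) = 0" using measure_nonneg[of ?M "B L"] by linarith
    then show ?thesis using Bm P.emeasure_eq_measure by (auto simp: null_sets_def)
  qed
  have "AE w in ?M. \<forall>L. w \<notin> B L"
    unfolding AE_all_countable by (intro allI AE_I'[OF Bnull]) auto
  then show ?thesis using AE_nonneg_coords[OF W(1) nn] AE_space[of ?M]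
  proof eventually_elim
    case (elim w)
    show ?case
    proof
      assume sm: "summable (\<lambda>n. Lw z w n)"
      have Lnn: "0 \<le> Lw z w n" for n using Lw_nonneg[of w z n] elim z by blast
      have YL: "Yr z w n \<le> Lw z w n" for n using Lnn[of n] by (simp add: Yr_def)
      obtain L :: nat where L: "(\<Sum>n. Lw z w n) \<le> real L" using real_arch_simple by blast
      have "(\<Sum>n<N. Yr z w n) \<le> real L" for N
      proof -
        have "(\<Sum>n<N. Yr z w n) \<le> (\<Sum>n<N. Lw z w n)" by (intro sum_mono YL)
        also have "\<dots> \<le> (\<Sum>n. Lw z w n)" using sm Lnn by (intro sum_le_suminf) auto
        finally show ?thesis using L by linarith
      qed
      moreover have "w \<in> space ?M" using elim by blast
      ultimately have "w \<in> B L" by (auto simp: B_def)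
      with elim show False by blast
    qed
  qed
qed



abbreviation Mx :: "nat pmf \<Rightarrow> (nat\<times>nat \<Rightarrow> nat) measure" where
  "Mx p \<equiv> PiM UNIV (\<lambda>_::nat\<times>nat. measure_pmf p)"

lemma space_Mx: "space (Mx p) = UNIV"
  by (simp add: space_PiM)

lemma comp_meas_x: "(\<lambda>x. x i) \<in> measurable (Mx p) (count_space UNIV)"
proof -
  have "(\<lambda>x. x i) \<in> measurable (Mx p) (measure_pmf p)" by simp
  then show ?thesis by (simp cong: measurable_cong_sets)
qed

lemma sum_meas_x: "(\<lambda>x. \<Sum>i<m. x (n,i)) \<in> measurable (Mx p) (count_space UNIV)"
proof (induction m)
  case (Suc m)
  have "(\<lambda>x. (\<lambda>a x. a + x (n,m)) (\<Sum>i<m. x (n,i)) x) \<in> measurable (Mx p) (count_space UNIV)"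
  proof (rule measurable_compose_countable[OF _ Suc])
    fix a :: nat
    show "(\<lambda>x. a + x (n,m)) \<in> measurable (Mx p) (count_space UNIV)"
      using measurable_compose_countable[of "\<lambda>b x. a + b" "Mx p" "count_space UNIV" "\<lambda>x. x (n,m)"]
        comp_meas_x by simp
  qed
  then show ?case by simp
qed simp

lemma gen_meas: "(\<lambda>x. gw_gen x n) \<in> measurable (Mx p) (count_space UNIV)"
proof (induction n)
  case (Suc n)
  have "(\<lambda>x. (\<lambda>m x. \<Sum>i<m. x (n,i)) (gw_gen x n) x) \<in> measurable (Mx p) (count_space UNIV)"
    by (rule measurable_compose_countable[OF sum_meas_x Suc])
  then show ?case by simp
qed simp

lemma fun_gen_meas:
  "(\<lambda>x. f (gw_gen x n) :: real) \<in> borel_measurable (Mx p)"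
  using measurable_compose_countable[of "\<lambda>m x. f m" "Mx p" borel "\<lambda>x. gw_gen x n"] gen_meas
  by simp

lemma sets_summable:
  fixes f :: "nat \<Rightarrow> 'a \<Rightarrow> real"
  assumes [measurable]: "\<And>n. f n \<in> borel_measurable M"
  shows "{x\<in>space M. summable (\<lambda>n. f n x)} \<in> sets M"
proof -
  have "{x\<in>space M. summable (\<lambda>n. f n x)} = {x\<in>space M. Cauchy (\<lambda>N. \<Sum>n<N. f n x)}"
    by (simp add: summable_iff_convergent Cauchy_convergent_iff)
  also have "\<dots> \<in> sets M" by measurable
  finally show ?thesis .
qed

lemma sets_summable_gen:
  "{x\<in>space (Mx p). summable (\<lambda>n. f (gw_gen x n) :: real)} \<in> sets (Mx p)"
  by (rule sets_summable[OF fun_gen_meas])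

definition Good :: "(nat\<times>nat \<Rightarrow> nat) set" where "Good = {x. \<forall>i. 1 \<le> x i}"

lemma AE_Good:
  assumes "pmf p 0 = 0"
  shows "AE x in Mx p. x \<in> Good"
proof -
  have "AE y in measure_pmf p. 1 \<le> y"
    unfolding AE_measure_pmf_iff using assms by (auto simp: set_pmf_iff Suc_le_eq intro: gr0I)
  then have "\<forall>i. AE x in Mx p. 1 \<le> x i"
    by (auto intro!: AE_PiM_component measure_pmf.prob_space_axioms)
  then show ?thesis unfolding Good_def AE_all_countable[symmetric] by simp
qed

lemma gen_ge1: "x \<in> Good \<Longrightarrow> 1 \<le> gw_gen x n"
proof (induction n)
  case (Suc n)
  then have "gw_gen x n > 0" by simp
  then have "x (n,0) \<le> (\<Sum>i<gw_gen x n. x (n,i))"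
    by (intro member_le_sum) auto
  moreover have "1 \<le> x (n,0)" using Suc.prems by (auto simp: Good_def)
  ultimately show ?case by simp
qed simp

definition shift :: "nat \<Rightarrow> (nat\<times>nat \<Rightarrow> nat) \<Rightarrow> (nat\<times>nat \<Rightarrow> nat)" where
  "shift k x = (\<lambda>ni. x (fst ni + k, snd ni))"

lemma gen_shift: "x \<in> Good \<Longrightarrow> gw_gen (shift k x) n \<le> gw_gen x (n + k)"
proof (induction n)
  case 0
  then show ?case using gen_ge1[of x k] by simp
next
  case (Suc n)
  have "gw_gen (shift k x) (Suc n) = (\<Sum>i<gw_gen (shift k x) n. x (n + k, i))"
    by (simp add: shift_def)
  also have "\<dots> \<le> (\<Sum>i<gw_gen x (n + k). x (n + k, i))"
    using Suc by (intro sum_mono2) auto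
  also have "\<dots> = gw_gen x (Suc n + k)" by simp
  finally show ?case .
qed

lemma distr_shift: "distr (Mx p) (Mx p) (shift k) = Mx p"
proof -
  define f where "f = (\<lambda>ni::nat\<times>nat. (fst ni + k, snd ni))"
  have "inj_on f UNIV" by (auto simp: f_def inj_on_def prod_eq_iff)
  then have "distr (Mx p) (PiM UNIV (\<lambda>i. measure_pmf p)) (\<lambda>\<omega>. \<lambda>n\<in>UNIV. \<omega> (f n)) = PiM UNIV (\<lambda>i. measure_pmf p)"
    using distr_PiM_reindex[of UNIV "\<lambda>_. measure_pmf p" f UNIV] by (simp add: measure_pmf.prob_space_axioms)
  moreover have "(\<lambda>\<omega>. \<lambda>n\<in>UNIV. \<omega> (f n)) = shift k" by (auto simp: f_def shift_def restrict_def fun_eq_iff)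
  ultimately show ?thesis by simp
qed



lemma shift_meas: "shift k \<in> measurable (Mx p) (Mx p)"
  unfolding shift_def
  by (rule measurable_PiM_single') (auto simp: space_PiM)

lemma zero_one:
  fixes g :: "nat \<Rightarrow> real"
  assumes p0: "pmf p 0 = 0" and gnn: "\<And>k. 0 \<le> g k" and gmono: "\<And>k m. k \<le> m \<Longrightarrow> g m \<le> g k"
  shows "measure (Mx p) {x\<in>space (Mx p). summable (\<lambda>n. g (gw_gen x n))} = 0 \<or>
         measure (Mx p) {x\<in>space (Mx p). summable (\<lambda>n. g (gw_gen x n))} = 1"
proof -
  let ?M = "Mx p"
  interpret P: prob_space ?M by (intro prob_space_PiM) (auto simp: measure_pmf.prob_space_axioms)
  define A where "A = {x\<in>space ?M. summable (\<lambda>n. g (gw_gen x n))}"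
  have Am: "A \<in> sets ?M" unfolding A_def by (rule sets_summable_gen)
  define E where "E k = shift k -` A \<inter> space ?M" for k
  have Em: "E k \<in> sets ?M" for k unfolding E_def by (rule measurable_sets[OF shift_meas Am])
  have mE: "measure ?M (E k) = measure ?M A" for k
  proof -
    have "emeasure ?M A = emeasure (distr ?M ?M (shift k)) A" by (simp add: distr_shift)
    also have "\<dots> = emeasure ?M (E k)" unfolding E_def by (rule emeasure_distr[OF shift_meas Am])
    finally show ?thesis by (simp add: measure_def)
  qed
  have EA: "x \<in> E k \<Longrightarrow> x \<in> Good \<Longrightarrow> x \<in> A" for x k
  proof -
    assume x: "x \<in> E k" "x \<in> Good"
    then have s: "summable (\<lambda>n. g (gw_gen (shift k x) n))" by (auto simp: E_def A_def)
    have "summable (\<lambda>n. g (gw_gen x (n + k)))"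
      by (rule summable_comparison_test'[OF s]) (use gnn gmono gen_shift[OF x(2)] in auto)
    then show "x \<in> A" by (simp add: A_def space_Mx summable_iff_shift[of "\<lambda>n. g (gw_gen x n)" k])
  qed
  have AE_EA: "AE x in ?M. x \<in> E k \<longleftrightarrow> x \<in> A" for k
  proof -
    have ae1: "AE x in ?M. x \<in> E k \<longrightarrow> x \<in> A" using AE_Good[OF p0] by eventually_elim (use EA in auto)
    then have "AE x in ?M. x \<in> E k \<inter> A \<longleftrightarrow> x \<in> E k" by eventually_elim auto
    then have "measure ?M (E k \<inter> A) = measure ?M (E k)"
      using Em Am by (intro measure_eq_AE) auto
    then have "measure ?M (A - E k) = 0"
      using P.finite_measure_Diff'[OF Am Em[of k]] mE[of k] by (simp add: Int_commute)
    then have "A - E k \<in> null_sets ?M" using Am Em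
      by (auto simp: null_sets_def P.emeasure_eq_measure)
    then have "AE x in ?M. x \<notin> A - E k" by (rule AE_not_in)
    with ae1 show ?thesis by eventually_elim auto
  qed
  define T where "T = {x\<in>space ?M. \<forall>m. \<exists>k\<ge>m. x \<in> E k}"
  have AE_T: "AE x in ?M. x \<in> T \<longleftrightarrow> x \<in> A"
  proof -
    have "AE x in ?M. \<forall>k. x \<in> E k \<longleftrightarrow> x \<in> A" unfolding AE_all_countable using AE_EA by blast
    then show ?thesis by eventually_elim (auto simp: T_def space_Mx)
  qed
  define Ab where "Ab n = sigma_sets (space ?M)
      {(\<lambda>\<omega>. restrict \<omega> ({n}\<times>UNIV)) -` B \<inter> space ?M | B. B \<in> sets (PiM ({n}\<times>UNIV) (\<lambda>_. measure_pmf p))}" for n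
  have ind: "P.indep_sets Ab UNIV"
    using indep_blocks[OF measure_pmf.prob_space_axioms[of p]]
    unfolding P.indep_vars_def Ab_def by blast
  have Abpow: "Ab n \<subseteq> Pow (space ?M)" for n
  proof
    fix X assume "X \<in> Ab n"
    then have "X \<subseteq> space ?M" unfolding Ab_def by (rule sigma_sets_into_sp[rotated]) auto
    then show "X \<in> Pow (space ?M)" by simp
  qed
  have Absig: "sigma_algebra (space ?M) (Ab n)" for n
    unfolding Ab_def by (rule sigma_algebra_sigma_sets) auto
  have Etail: "E k \<in> sigma_sets (space ?M) (\<Union>(Ab ` {m..}))" if km: "m \<le> k" for k m
  proof -
    let ?G = "\<Union>(Ab ` {m..})"
    have Gpow: "?G \<subseteq> Pow (space ?M)" using Abpow by blast
    let ?N = "sigma (space ?M) ?G"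
    have sN: "sets ?N = sigma_sets (space ?M) ?G" using Gpow by (rule sets_measure_of)
    have spN: "space ?N = space ?M" using Gpow by (rule space_measure_of)
    have "shift k \<in> measurable ?N ?M"
    proof (rule measurable_PiM_single)
      show "shift k \<in> space ?N \<rightarrow> (\<Pi>\<^sub>E i\<in>UNIV. space (measure_pmf p))" by auto
    next
      fix B and i :: "nat\<times>nat"
      assume B: "B \<in> sets (measure_pmf p)"
      obtain a b where i: "i = (a,b)" by (cases i)
      let ?j = "a + k"
      let ?B' = "(\<lambda>f. f (?j,b)) -` B \<inter> space (PiM ({?j}\<times>UNIV) (\<lambda>_. measure_pmf p))"
      have B': "?B' \<in> sets (PiM ({?j}\<times>UNIV) (\<lambda>_. measure_pmf p))"
        by (rule measurable_sets[OF _ B]) simp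
      have eq: "{\<omega> \<in> space ?N. shift k \<omega> i \<in> B} = (\<lambda>\<omega>. restrict \<omega> ({?j}\<times>UNIV)) -` ?B' \<inter> space ?M"
        by (auto simp: spN i shift_def space_PiM add.commute)
      have "(\<lambda>\<omega>. restrict \<omega> ({?j}\<times>UNIV)) -` ?B' \<inter> space ?M \<in> Ab ?j"
        unfolding Ab_def by (rule sigma_sets.Basic) (use B' in blast)
      then have "(\<lambda>\<omega>. restrict \<omega> ({?j}\<times>UNIV)) -` ?B' \<inter> space ?M \<in> ?G" using km by auto
      then show "{\<omega> \<in> space ?N. shift k \<omega> i \<in> B} \<in> sets ?N"
        unfolding eq sN by (rule sigma_sets.Basic)
    qed
    then have "shift k -` A \<inter> space ?N \<in> sets ?N" by (rule measurable_sets) (rule Am)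
    then show ?thesis unfolding E_def sN spN .
  qed
  have Ttail: "T \<in> P.tail_events Ab"
    unfolding P.tail_events_def
  proof (rule InterI, clarify)
    fix m
    have "T = (\<Inter>i. \<Union>j. E (j + i + m))"
    proof (intro equalityI subsetI)
      fix x assume "x \<in> T"
      then have x: "\<And>m'. \<exists>k\<ge>m'. x \<in> E k" by (auto simp: T_def)
      show "x \<in> (\<Inter>i. \<Union>j. E (j + i + m))"
      proof
        fix i
        obtain k where "k \<ge> i + m" "x \<in> E k" using x by blast
        then have "x \<in> E ((k - (i+m)) + i + m)" by simp
        then show "x \<in> (\<Union>j. E (j + i + m))" by blast
      qed
    next
      fix x assume x: "x \<in> (\<Inter>i. \<Union>j. E (j + i + m))"
      have "\<exists>k\<ge>m'. x \<in> E k" for m'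
      proof -
        obtain j where "x \<in> E (j + m' + m)" using x by blast
        then show ?thesis by (intro exI[of _ "j + m' + m"]) auto
      qed
      then show "x \<in> T" by (auto simp: T_def space_Mx)
    qed
    also have "\<dots> \<in> sigma_sets (space ?M) (\<Union>(Ab ` {m..}))"
    proof (rule sigma_sets_Inter)
      show "\<Union>(Ab ` {m..}) \<subseteq> Pow (space ?M)" using Abpow by blast
      fix i
      show "(\<Union>j. E (j + i + m)) \<in> sigma_sets (space ?M) (\<Union>(Ab ` {m..}))"
        by (rule sigma_sets.Union) (rule Etail, simp)
    qed
    finally show "T \<in> sigma_sets (space ?M) (\<Union>(Ab ` {m..}))" .
  qed
  have "P.prob T = 0 \<or> P.prob T = 1"
    by (rule P.kolmogorov_0_1_law[OF Absig ind Ttail])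
  moreover have Tm: "T \<in> sets ?M"
    using P.tail_events_sets[of Ab] Ttail ind unfolding P.indep_sets_def by blast
  moreover have "P.prob T = P.prob A" using AE_T Tm Am by (rule measure_eq_AE)
  ultimately show ?thesis unfolding A_def by simp
qed



lemma wside:
  fixes W :: "real measure"
  assumes W: "prob_space W" "sets W = sets borel" and nn: "AE x in W. 0 \<le> x"
    and z: "\<And>n. 1 \<le> z n"
  shows "emeasure (PiM UNIV (\<lambda>_::nat\<times>nat. W)) {w\<in>space (PiM UNIV (\<lambda>_::nat\<times>nat. W)). summable (\<lambda>n. Lw z w n)}
     = (if summable (\<lambda>n. gf W (z n)) then 1 else 0)"
proof -
  let ?M = "PiM UNIV (\<lambda>_::nat\<times>nat. W)"
  interpret P: prob_space ?M using W by (intro prob_space_PiM) auto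
  have Sm: "{w\<in>space ?M. summable (\<lambda>n. Lw z w n)} \<in> sets ?M"
    by (rule sets_summable) (rule Lw_meas[OF W(2)])
  show ?thesis
  proof (cases "summable (\<lambda>n. gf W (z n))")
    case True
    have "AE w in ?M. w \<in> {w\<in>space ?M. summable (\<lambda>n. Lw z w n)} \<longleftrightarrow> w \<in> space ?M"
      using fwd[OF W nn z True] by eventually_elim auto
    then have "emeasure ?M {w\<in>space ?M. summable (\<lambda>n. Lw z w n)} = emeasure ?M (space ?M)"
      using Sm by (intro emeasure_eq_AE) auto
    then show ?thesis using True P.emeasure_space_1 by simp
  next
    case False
    have "AE w in ?M. w \<in> {w\<in>space ?M. summable (\<lambda>n. Lw z w n)} \<longleftrightarrow> w \<in> {}"
      using bwd[OF W nn z False] by eventually_elim auto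
    then have "emeasure ?M {w\<in>space ?M. summable (\<lambda>n. Lw z w n)} = emeasure ?M {}"
      using Sm by (intro emeasure_eq_AE) auto
    then show ?thesis using False by simp
  qed
qed

theorem proposition4p2:
  fixes p :: "nat pmf" and W :: "real measure"
  assumes "pmf p 0 = 0"
    and "prob_space W" and "sets W = sets borel"
    and "AE x in W. 0 \<le> x"
  defines "\<Omega> \<equiv> gw_space p W"
  defines "cond1 \<equiv> measure \<Omega> {\<omega> \<in> space \<Omega>.
              summable (\<lambda>n. (measure W {1<..}) ^ gw_gen (fst \<omega>) n)} = 1"
  defines "cond2 \<equiv> measure \<Omega> {\<omega> \<in> space \<Omega>.
              summable (\<lambda>n. LBINT t:{0..1}. (measure W {t<..}) ^ gw_gen (fst \<omega>) n)} = 1"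
  defines "P \<equiv> measure \<Omega> {\<omega> \<in> space \<Omega>. summable (\<lambda>n. gw_min_weight \<omega> n)}"
  shows "(P = 1 \<longleftrightarrow> cond1 \<and> cond2) \<and> (\<not> (cond1 \<and> cond2) \<longrightarrow> P = 0)"
proof -
  note p0 = assms(1) and W = assms(2,3) and nn = assms(4)
  let ?Mw = "PiM UNIV (\<lambda>_::nat\<times>nat. W)"
  let ?Mx = "Mx p"
  interpret Pw: prob_space ?Mw using W by (intro prob_space_PiM) auto
  interpret Px: prob_space ?Mx by (intro prob_space_PiM) (auto simp: measure_pmf.prob_space_axioms)
  have Om: "\<Omega> = ?Mx \<Otimes>\<^sub>M ?Mw" unfolding \<Omega>_def gw_space_def by simp
  have spO: "space \<Omega> = space ?Mx \<times> space ?Mw" unfolding Om by (simp add: space_pair_measure)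
  have fstset: "measure \<Omega> {\<omega> \<in> space \<Omega>. Q (fst \<omega>)} = measure ?Mx {x\<in>space ?Mx. Q x}"
    if Qm: "{x\<in>space ?Mx. Q x} \<in> sets ?Mx" for Q
  proof -
    have "{\<omega> \<in> space \<Omega>. Q (fst \<omega>)} = {x\<in>space ?Mx. Q x} \<times> space ?Mw" by (auto simp: spO)
    then have "emeasure \<Omega> {\<omega> \<in> space \<Omega>. Q (fst \<omega>)} = emeasure ?Mx {x\<in>space ?Mx. Q x} * emeasure ?Mw (space ?Mw)"
      unfolding Om using Qm by (simp add: Pw.emeasure_pair_measure_Times)
    then show ?thesis by (simp add: measure_def Pw.emeasure_space_1)
  qed
  define C1 where "C1 = {x\<in>space ?Mx. summable (\<lambda>n. measure W {1<..} ^ gw_gen x n)}"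
  define C2 where "C2 = {x\<in>space ?Mx. summable (\<lambda>n. gf W (gw_gen x n))}"
  have C1m: "C1 \<in> sets ?Mx" unfolding C1_def by (rule sets_summable_gen)
  have C2m: "C2 \<in> sets ?Mx" unfolding C2_def by (rule sets_summable_gen)
  have c1: "cond1 \<longleftrightarrow> measure ?Mx C1 = 1"
    unfolding cond1_def using fstset[OF C1m[unfolded C1_def]] by (simp add: C1_def)
  have c2: "cond2 \<longleftrightarrow> measure ?Mx C2 = 1"
    unfolding cond2_def gf_def[symmetric] using fstset[OF C2m[unfolded C2_def]] by (simp add: C2_def)
  define S where "S = {\<omega> \<in> space \<Omega>. summable (\<lambda>n. gw_min_weight \<omega> n)}"
  have gmw: "gw_min_weight \<omega> n = Lw (gw_gen (fst \<omega>)) (snd \<omega>) n" for \<omega> n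
    by (simp add: gw_min_weight_def Lw_def)
  have Sm: "S \<in> sets (?Mx \<Otimes>\<^sub>M ?Mw)"
  proof -
    have "(\<lambda>\<omega>. gw_min_weight \<omega> n) \<in> borel_measurable (?Mx \<Otimes>\<^sub>M ?Mw)" for n
    proof -
      have g: "(\<lambda>\<omega>. gw_gen (fst \<omega>) n) \<in> measurable (?Mx \<Otimes>\<^sub>M ?Mw) (count_space UNIV)"
        by (rule measurable_compose[OF measurable_fst gen_meas])
      have f: "(\<lambda>\<omega>. Min ((\<lambda>k. snd \<omega> (n,k)) ` {..<m})) \<in> borel_measurable (?Mx \<Otimes>\<^sub>M ?Mw)" for m
      proof (rule borel_measurable_Min)
        fix k
        show "(\<lambda>\<omega>. snd \<omega> (n,k)) \<in> borel_measurable (?Mx \<Otimes>\<^sub>M ?Mw)"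
          by (rule measurable_compose[OF measurable_snd comp_meas[OF W(2)]])
      qed simp
      show ?thesis unfolding gw_min_weight_def
        by (rule measurable_compose_countable[OF f g])
    qed
    then show ?thesis unfolding S_def Om by (rule sets_summable)
  qed
  have "emeasure \<Omega> S = (\<integral>\<^sup>+x. emeasure ?Mw (Pair x -` S) \<partial>?Mx)"
    unfolding Om by (rule Pw.emeasure_pair_measure_alt[OF Sm])
  also have "\<dots> = (\<integral>\<^sup>+x. indicator C2 x \<partial>?Mx)"
  proof (rule nn_integral_cong_AE)
    show "AE x in ?Mx. emeasure ?Mw (Pair x -` S) = indicator C2 x"
      using AE_Good[OF p0]
    proof eventually_elim
      case (elim x)
      have z: "1 \<le> gw_gen x n" for n using gen_ge1[OF elim] .
      have "Pair x -` S = {w\<in>space ?Mw. summable (\<lambda>n. Lw (gw_gen x) w n)}"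
        by (auto simp: S_def spO gmw space_Mx)
      then show ?case
        using wside[OF W nn, of "gw_gen x"] z by (auto simp: C2_def space_Mx indicator_def)
    qed
  qed
  also have "\<dots> = emeasure ?Mx C2" using C2m by simp
  finally have PC2: "P = measure ?Mx C2" unfolding P_def S_def[symmetric] by (simp add: measure_def)
  have zo: "measure ?Mx C2 = 0 \<or> measure ?Mx C2 = 1"
    unfolding C2_def
    by (rule zero_one[OF p0]) (use gf_nonneg[OF W] gf_antimono[OF W] in auto)
  have sub: "C2 \<subseteq> C1"
  proof
    fix x assume "x \<in> C2"
    then have s: "summable (\<lambda>n. gf W (gw_gen x n))" by (simp add: C2_def)
    have "summable (\<lambda>n. measure W {1<..} ^ gw_gen x n)"
      by (rule summable_comparison_test'[OF s]) (use gf_ge[OF W] in auto)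
    then show "x \<in> C1" by (simp add: C1_def space_Mx)
  qed
  show ?thesis
  proof (cases "measure ?Mx C2 = 1")
    case True
    then have "measure ?Mx C1 \<ge> 1" using Px.finite_measure_mono[OF sub C1m] by simp
    then have "measure ?Mx C1 = 1" using Px.prob_le_1[of C1] by simp
    then show ?thesis using True c1 c2 PC2 by simp
  next
    case False
    then have "measure ?Mx C2 = 0" using zo by simp
    then show ?thesis using False c2 PC2 by simp
  qed
qed

end
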